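(* In the contention game with $k=2$ channels under acknowledgement-based feedback and $2\le n\le4$ players, let all players other than $i$ use $f^2$, and let player $i$ use any protocol $r_i\notin\mathcal G^{f^2}$. Then the expected latency of player $i$ under the profile $(f^2_{-i},r_i)$ is at least $2^n/n$.
   Context: Contention game: $n$ players, channels $K=\{1,\dots,k\}$, slots $t=1,2,\dots$; each player has one packet, initially pending; in each slot a pending player chooses (possibly randomly) an action in $\{0,1,\dots,k\}$ ($0$ = idle, $a$ = transmit on channel $a$); a lone transmitter on a channel succeeds and leaves, colliding transmitters remain pending. Latency = slot of successful transmission. Acknowledgement-based: decision rules depend only on the personal action history; only transmitters learn whether they succeeded. $f^2$ is the protocol that in every slot, regardless of history, transmits on each of the two channels with probability $1/2$ and never idles. For $\tau^*\ge1$ and a personal history $h_{i,\tau^*}=(a_{i,1},\dots,a_{i,\tau^*})$, $g_i(h_{i,\tau^*})$ is the protocol playing $a_{i,t}$ with probability $1$ for $1\le t\le\tau^*$ and following $f^2$ for $t>\tau^*$. $\mathcal G^{f^2}$ is the set of all such $g_i(h_{i,\tau^*})$, over all $\tau^*\ge1$, for which $h_{i,\tau^*}$ occurs with positive probability when all players use $f^2$. *)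

theory Defs
  imports "HOL-Probability.Probability"
begin

text \<open>Actions are natural numbers: 0 = idle, a \<ge> 1 = transmit on channel a.
  A protocol (decision rule) maps the personal action history (the list of own actions
  in slots 1..t-1) to a distribution over the action in slot t.\<close>

type_synonym protocol = "nat list \<Rightarrow> nat pmf"

definition valid_protocol :: "nat \<Rightarrow> protocol \<Rightarrow> bool" where
  "valid_protocol k f \<longleftrightarrow> (\<forall>h. set_pmf (f h) \<subseteq> {0..k})"

record gstate =
  pending :: "nat set"
  hist :: "nat \<Rightarrow> nat list"
  lat :: "nat \<Rightarrow> nat option"

definition init_state :: "nat \<Rightarrow> gstate" where
  "init_state n = \<lparr>pending = {0..<n}, hist = (\<lambda>_. []), lat = (\<lambda>_. None)\<rparr>"

definition update :: "nat \<Rightarrow> gstate \<Rightarrow> (nat \<Rightarrow> nat) \<Rightarrow> gstate" where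
  "update t s a =
    (let P = pending s;
         P' = {j \<in> P. a j = 0 \<or> (\<exists>j'\<in>P. j' \<noteq> j \<and> a j' = a j)}
     in \<lparr>pending = P',
         hist = (\<lambda>j. if j \<in> P then hist s j @ [a j] else hist s j),
         lat = (\<lambda>j. if j \<in> P \<and> j \<notin> P' then Some t else lat s j)\<rparr>)"

definition step :: "(nat \<Rightarrow> protocol) \<Rightarrow> nat \<Rightarrow> gstate \<Rightarrow> gstate pmf" where
  "step prof t s = map_pmf (update t s) (Pi_pmf (pending s) 0 (\<lambda>j. prof j (hist s j)))"

fun game_dist :: "nat \<Rightarrow> (nat \<Rightarrow> protocol) \<Rightarrow> nat \<Rightarrow> gstate pmf" where
  "game_dist n prof 0 = return_pmf (init_state n)"
| "game_dist n prof (Suc t) = bind_pmf (game_dist n prof t) (step prof (Suc t))"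

definition lat_prob :: "nat \<Rightarrow> (nat \<Rightarrow> protocol) \<Rightarrow> nat \<Rightarrow> nat \<Rightarrow> real" where
  "lat_prob n prof i t = measure_pmf.prob (game_dist n prof t) {s. lat s i = Some t}"

definition expected_latency :: "nat \<Rightarrow> (nat \<Rightarrow> protocol) \<Rightarrow> nat \<Rightarrow> ennreal" where
  "expected_latency n prof i =
    (if (\<Sum>t. ennreal (lat_prob n prof i t)) = 1
     then (\<Sum>t. ennreal (real t * lat_prob n prof i t))
     else \<infinity>)"

definition f2 :: protocol where
  "f2 = (\<lambda>h. pmf_of_set {1, 2})"

definition g_prot :: "nat list \<Rightarrow> protocol" where
  "g_prot h = (\<lambda>h'. if length h' < length h then return_pmf (h ! length h') else f2 h')"

definition G_f2 :: "nat \<Rightarrow> nat \<Rightarrow> protocol set" where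
  "G_f2 n i = {g_prot h | h. h \<noteq> [] \<and>
      measure_pmf.prob (game_dist n (\<lambda>_. f2) (length h)) {s. hist s i = h} > 0}"

end

theory Submission
  imports Defs
begin


definition V :: "nat \<Rightarrow> real" where
  "V m = (if m = 0 then 1 else if m = 1 then 2 else if m = 2 then 8/3 else 4)"

definition newpend :: "nat set \<Rightarrow> (nat \<Rightarrow> nat) \<Rightarrow> nat set" where
  "newpend P a = {j \<in> P. a j = 0 \<or> (\<exists>j'\<in>P. j' \<noteq> j \<and> a j' = a j)}"

definition Gf :: "nat \<Rightarrow> nat set \<Rightarrow> nat \<Rightarrow> (nat \<Rightarrow> nat) \<Rightarrow> real" where
  "Gf t P i a = (if i \<in> newpend P a then real t + 1 + V (card (newpend P a) - 1) else real t + 1)"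

abbreviation U :: "nat pmf" where "U \<equiv> pmf_of_set {1,2}"

lemma newpend_list: "newpend (set xs) a = set (filter (\<lambda>j. a j = 0 \<or> (\<exists>j'\<in>set xs. j' \<noteq> j \<and> a j' = a j)) xs)"
  unfolding newpend_def by auto

lemma Gf_list: "distinct xs \<Longrightarrow> Gf t (set xs) k a = (let ys = filter (\<lambda>j. a j = 0 \<or> (\<exists>j'\<in>set xs. j' \<noteq> j \<and> a j' = a j)) xs in
   if k \<in> set ys then real t + 1 + V (length ys - 1) else real t + 1)"
proof -
  assume d: "distinct xs"
  let ?ys = "filter (\<lambda>j. a j = 0 \<or> (\<exists>j'\<in>set xs. j' \<noteq> j \<and> a j' = a j)) xs"
  have "card (set ?ys) = length ?ys" by (rule distinct_card[OF distinct_filter[OF d]])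
  then show ?thesis unfolding Gf_def newpend_list Let_def by (simp only: \<open>card (set ?ys) = length ?ys\<close>)
qed



lemma V_nonneg: "V m \<ge> 0" by (simp add: V_def)
lemma Gf_nonneg: "Gf t P i a \<ge> 0" by (simp add: Gf_def V_nonneg)

lemma Pi_step:
  assumes "finite Q" "j \<notin> Q" "\<And>a. g a \<ge> 0"
  shows "(\<integral>\<^sup>+a. ennreal (g a) \<partial>Pi_pmf (insert j Q) 0 (\<lambda>_. U)) =
         (\<integral>\<^sup>+a. ennreal ((g (a(j:=1)) + g (a(j:=2)))/2) \<partial>Pi_pmf Q 0 (\<lambda>_. U))"
proof -
  have "(\<integral>\<^sup>+a. ennreal (g a) \<partial>Pi_pmf (insert j Q) 0 (\<lambda>_. U)) =
     (\<integral>\<^sup>+y. \<integral>\<^sup>+b. ennreal (g (b(j:=y))) \<partial>Pi_pmf Q 0 (\<lambda>_. U) \<partial>U)"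
    using assms by (simp add: Pi_pmf_insert nn_integral_pair_pmf')
  also have "\<dots> = ((\<integral>\<^sup>+b. ennreal (g (b(j:=1))) \<partial>Pi_pmf Q 0 (\<lambda>_. U)) + (\<integral>\<^sup>+b. ennreal (g (b(j:=2))) \<partial>Pi_pmf Q 0 (\<lambda>_. U))) / 2"
    by (simp add: nn_integral_pmf_of_set)
  also have "\<dots> = (\<integral>\<^sup>+b. (ennreal (g (b(j:=1))) + ennreal (g (b(j:=2)))) / 2 \<partial>Pi_pmf Q 0 (\<lambda>_. U))"
    by (simp add: nn_integral_add nn_integral_divide)
  also have "\<dots> = (\<integral>\<^sup>+a. ennreal ((g (a(j:=1)) + g (a(j:=2)))/2) \<partial>Pi_pmf Q 0 (\<lambda>_. U))"
    using assms(3) by (intro nn_integral_cong) (simp add: ennreal_plus[symmetric] ennreal_divide_numeral del: ennreal_plus)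
  finally show ?thesis .
qed


lemma bell1:
  assumes dist: "distinct [i,j1]" and y: "y \<in> {0,1,2}"
  shows "ennreal (real t + V 1) \<le> (\<integral>\<^sup>+b. ennreal (Gf t (set [i,j1]) i (b(i:=y))) \<partial>Pi_pmf (set [j1]) 0 (\<lambda>_. U))"
proof -
  have n: "i \<noteq> j1" using dist by auto
  have e: "set [j1] = insert j1 ({})" by simp
  show ?thesis
    unfolding e
    apply (subst Pi_step, simp, use n in simp, simp add: Gf_nonneg)+
    apply (simp only: pmf_Pi_empty)
    apply (subst nn_integral_return_pmf, simp add: Gf_nonneg)
    apply (subst ennreal_le_iff, simp add: Gf_nonneg)
    apply (simp only: Gf_list[OF dist])
    using y n n[symmetric] by (auto simp: V_def field_simps)
qed

lemma bell2:
  assumes dist: "distinct [i,j1,j2]" and y: "y \<in> {0,1,2}"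
  shows "ennreal (real t + V 2) \<le> (\<integral>\<^sup>+b. ennreal (Gf t (set [i,j1,j2]) i (b(i:=y))) \<partial>Pi_pmf (set [j1,j2]) 0 (\<lambda>_. U))"
proof -
  have n: "i \<noteq> j1" "i \<noteq> j2" "j1 \<noteq> j2" using dist by auto
  have e: "set [j1,j2] = insert j1 (insert j2 ({}))" by simp
  show ?thesis
    unfolding e
    apply (subst Pi_step, simp, use n in simp, simp add: Gf_nonneg)+
    apply (simp only: pmf_Pi_empty)
    apply (subst nn_integral_return_pmf, simp add: Gf_nonneg)
    apply (subst ennreal_le_iff, simp add: Gf_nonneg)
    apply (simp only: Gf_list[OF dist])
    using y n n[symmetric] by (auto simp: V_def field_simps)
qed

lemma bell3:
  assumes dist: "distinct [i,j1,j2,j3]" and y: "y \<in> {0,1,2}"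
  shows "ennreal (real t + V 3) \<le> (\<integral>\<^sup>+b. ennreal (Gf t (set [i,j1,j2,j3]) i (b(i:=y))) \<partial>Pi_pmf (set [j1,j2,j3]) 0 (\<lambda>_. U))"
proof -
  have n: "i \<noteq> j1" "i \<noteq> j2" "i \<noteq> j3" "j1 \<noteq> j2" "j1 \<noteq> j3" "j2 \<noteq> j3" using dist by auto
  have e: "set [j1,j2,j3] = insert j1 (insert j2 (insert j3 ({})))" by simp
  show ?thesis
    unfolding e
    apply (subst Pi_step, simp, use n in simp, simp add: Gf_nonneg)+
    apply (simp only: pmf_Pi_empty)
    apply (subst nn_integral_return_pmf, simp add: Gf_nonneg)
    apply (subst ennreal_le_iff, simp add: Gf_nonneg)
    apply (simp only: Gf_list[OF dist])
    using y n n[symmetric] by (auto simp: V_def field_simps)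
qed

lemma bell0:
  assumes y: "y \<in> {0,1,2}"
  shows "ennreal (real t + V 0) \<le> (\<integral>\<^sup>+b. ennreal (Gf t (set [i]) i (b(i:=y))) \<partial>Pi_pmf (set []) 0 (\<lambda>_. U))"
  apply (simp only: list.set(1) pmf_Pi_empty)
  apply (subst nn_integral_return_pmf, simp add: Gf_nonneg)
  apply (subst ennreal_le_iff, simp add: Gf_nonneg)
  apply (simp only: Gf_list[OF distinct_singleton])
  using y by (auto simp: V_def)



lemma bell_inner:
  assumes d: "distinct (i#js)" and l: "length js \<le> 3" and y: "y \<in> {0,1,2}"
  shows "ennreal (real t + V (length js)) \<le> (\<integral>\<^sup>+b. ennreal (Gf t (set (i#js)) i (b(i:=y))) \<partial>Pi_pmf (set js) 0 (\<lambda>_. U))"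
proof -
  have "length js = 0 \<or> length js = 1 \<or> length js = 2 \<or> length js = 3" using l by arith
  moreover
  { assume "length js = 0" then have "js = []" by simp
    then have ?thesis using bell0[OF y] by simp }
  moreover
  { assume "length js = 1" then obtain a where "js = [a]" by (auto simp: length_Suc_conv)
    then have ?thesis using bell1[OF _ y, of i a t] d by simp }
  moreover
  { assume "length js = 2" then obtain a b where "js = [a,b]" by (auto simp: length_Suc_conv numeral_2_eq_2)
    then have ?thesis using bell2[OF _ y, of i a b t] d by (simp add: numeral_2_eq_2) }
  moreover
  { assume "length js = 3" then obtain a b c where "js = [a,b,c]" by (auto simp: length_Suc_conv numeral_3_eq_3)
    then have ?thesis using bell3[OF _ y, of i a b c t] d by (simp add: numeral_3_eq_3) }
  ultimately show ?thesis by blast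
qed

lemma bell:
  assumes P: "finite P" "i \<in> P" "card P \<le> 4" and d: "set_pmf d \<subseteq> {0,1,2}"
  shows "ennreal (real t + V (card P - 1)) \<le> (\<integral>\<^sup>+a. ennreal (Gf t P i a) \<partial>Pi_pmf P 0 (\<lambda>j. if j = i then d else U))"
proof -
  obtain js where js: "set js = P - {i}" "distinct js" using finite_distinct_list[of "P - {i}"] P by auto
  have Pe: "P = insert i (set js)" using js P by auto
  have ni: "i \<notin> set js" using js by auto
  have len: "length js = card P - 1" using js P by (simp add: distinct_card[symmetric])
  have "(\<integral>\<^sup>+a. ennreal (Gf t P i a) \<partial>Pi_pmf P 0 (\<lambda>j. if j = i then d else U)) =
        (\<integral>\<^sup>+y. \<integral>\<^sup>+b. ennreal (Gf t P i (b(i:=y))) \<partial>Pi_pmf (set js) 0 (\<lambda>j. if j = i then d else U) \<partial>d)"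
    unfolding Pe using ni by (simp add: Pi_pmf_insert nn_integral_pair_pmf')
  also have "\<dots> = (\<integral>\<^sup>+y. \<integral>\<^sup>+b. ennreal (Gf t P i (b(i:=y))) \<partial>Pi_pmf (set js) 0 (\<lambda>_. U) \<partial>d)"
  proof -
    have "Pi_pmf (set js) 0 (\<lambda>j. if j = i then d else U) = Pi_pmf (set js) 0 (\<lambda>_. U)"
      using ni by (intro Pi_pmf_cong) auto
    then show ?thesis by simp
  qed
  also have "\<dots> \<ge> (\<integral>\<^sup>+y. ennreal (real t + V (card P - 1)) \<partial>d)"
  proof (rule nn_integral_mono_AE, rule AE_pmfI)
    fix y assume "y \<in> set_pmf d"
    then have y: "y \<in> {0,1,2}" using d by auto
    have "distinct (i#js)" using js ni by simp
    moreover have "length js \<le> 3" using len P by simp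
    ultimately show "ennreal (real t + V (card P - 1)) \<le> (\<integral>\<^sup>+b. ennreal (Gf t P i (b(i:=y))) \<partial>Pi_pmf (set js) 0 (\<lambda>_. U))"
      using bell_inner[OF _ _ y, of i js t] Pe len by simp
  qed
  ultimately show ?thesis by simp
qed

abbreviation pr :: "protocol \<Rightarrow> nat \<Rightarrow> nat \<Rightarrow> protocol" where
  "pr r i \<equiv> (\<lambda>j. if j = i then r else f2)"

lemma step_eq: "step (pr r i) t s = map_pmf (update t s) (Pi_pmf (pending s) 0 (\<lambda>j. if j = i then r (hist s i) else U))"
proof -
  have "(\<lambda>j. pr r i j (hist s j)) = (\<lambda>j. if j = i then r (hist s i) else U)"
    by (auto simp: f2_def)
  then show ?thesis unfolding step_def by simp
qed

lemma update_pending: "pending (update t s a) = newpend (pending s) a"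
  by (simp add: update_def newpend_def Let_def)

lemma update_lat: "lat (update t s a) j = (if j \<in> pending s \<and> j \<notin> newpend (pending s) a then Some t else lat s j)"
  by (simp add: update_def newpend_def Let_def)

lemma newpend_sub: "newpend P a \<subseteq> P" by (auto simp: newpend_def)

lemma invariant:
  "s \<in> set_pmf (game_dist n prof t) \<Longrightarrow> pending s \<subseteq> {0..<n} \<and> (\<forall>j u. lat s j = Some u \<longrightarrow> u \<le> t)"
proof (induction t arbitrary: s)
  case 0
  then show ?case by (simp add: init_state_def)
next
  case (Suc t)
  then obtain s0 a where s0: "s0 \<in> set_pmf (game_dist n prof t)" and s: "s = update (Suc t) s0 a"
    by (auto simp: step_def)
  have "pending s \<subseteq> pending s0" using s newpend_sub by (simp add: update_pending)
  moreover have "\<forall>j u. lat s0 j = Some u \<longrightarrow> u \<le> Suc t"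
    using Suc.IH[OF s0] by (auto intro: le_SucI)
  then have "\<forall>j u. lat s j = Some u \<longrightarrow> u \<le> Suc t"
    using s by (auto simp: update_lat)
  ultimately show ?case using Suc.IH[OF s0] by auto
qed

definition Hq :: "nat \<Rightarrow> nat \<Rightarrow> gstate \<Rightarrow> real" where
  "Hq i t s = (if i \<in> pending s then real t + V (card (pending s) - 1) else 0)"

lemma Hq_nonneg: "Hq i t s \<ge> 0" by (simp add: Hq_def V_nonneg)

lemma one_step:
  assumes vp: "valid_protocol 2 r" and n4: "n \<le> 4" and s: "s \<in> set_pmf (game_dist n (pr r i) t)"
  shows "ennreal (Hq i t s) \<le> (\<integral>\<^sup>+s'. ennreal (real (Suc t) * indicator {s'. lat s' i = Some (Suc t)} s' + Hq i (Suc t) s') \<partial>step (pr r i) (Suc t) s)"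
proof (cases "i \<in> pending s")
  case False
  then show ?thesis by (simp add: Hq_def)
next
  case True
  let ?P = "pending s"
  have sub: "?P \<subseteq> {0..<n}" using invariant[OF s] by simp
  have fin: "finite ?P" using sub finite_subset by blast
  have card: "card ?P \<le> 4" using card_mono[OF _ sub] n4 by simp
  have d: "set_pmf (r (hist s i)) \<subseteq> {0,1,2}" proof -
    have "{0..2::nat} = {0,1,2}" by auto
    then show ?thesis using vp unfolding valid_protocol_def by metis
  qed
  have "ennreal (Hq i t s) = ennreal (real t + V (card ?P - 1))" using True by (simp add: Hq_def)
  also have "\<dots> \<le> (\<integral>\<^sup>+a. ennreal (Gf t ?P i a) \<partial>Pi_pmf ?P 0 (\<lambda>j. if j = i then r (hist s i) else U))"
    by (rule bell[OF fin True card d])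
  also have "\<dots> \<le> (\<integral>\<^sup>+a. ennreal (real (Suc t) * indicator {s'. lat s' i = Some (Suc t)} (update (Suc t) s a) + Hq i (Suc t) (update (Suc t) s a)) \<partial>Pi_pmf ?P 0 (\<lambda>j. if j = i then r (hist s i) else U))"
  proof (rule nn_integral_mono)
    fix a
    show "ennreal (Gf t ?P i a) \<le> ennreal (real (Suc t) * indicator {s'. lat s' i = Some (Suc t)} (update (Suc t) s a) + Hq i (Suc t) (update (Suc t) s a))"
      using True by (auto simp: Gf_def Hq_def update_pending update_lat indicator_def intro!: ennreal_leI)
  qed
  also have "\<dots> = (\<integral>\<^sup>+s'. ennreal (real (Suc t) * indicator {s'. lat s' i = Some (Suc t)} s' + Hq i (Suc t) s') \<partial>step (pr r i) (Suc t) s)"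
    by (simp add: step_eq)
  finally show ?thesis .
qed

definition Qv :: "nat \<Rightarrow> protocol \<Rightarrow> nat \<Rightarrow> nat \<Rightarrow> ennreal" where
  "Qv n r i t = (\<integral>\<^sup>+s. ennreal (Hq i t s) \<partial>game_dist n (pr r i) t)"

lemma nn_cind: "(\<integral>\<^sup>+s. ennreal (c * indicator A s) \<partial>measure_pmf M) = ennreal (c * measure_pmf.prob M A)" if "c \<ge> 0"
proof -
  have "(\<integral>\<^sup>+s. ennreal (c * indicator A s) \<partial>measure_pmf M) = (\<integral>\<^sup>+s. ennreal c * indicator A s \<partial>measure_pmf M)"
    using that by (intro nn_integral_cong) (simp add: ennreal_mult ennreal_indicator)
  also have "\<dots> = ennreal c * emeasure (measure_pmf M) A" by (simp add: nn_integral_cmult_indicator)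
  also have "\<dots> = ennreal (c * measure_pmf.prob M A)" using that by (simp add: measure_pmf.emeasure_eq_measure ennreal_mult)
  finally show ?thesis .
qed

lemma Q_step:
  assumes vp: "valid_protocol 2 r" and n4: "n \<le> 4"
  shows "Qv n r i t \<le> ennreal (real (Suc t) * lat_prob n (pr r i) i (Suc t)) + Qv n r i (Suc t)"
proof -
  let ?F = "\<lambda>s'. ennreal (real (Suc t) * indicator {s'. lat s' i = Some (Suc t)} s' + Hq i (Suc t) s')"
  have "Qv n r i t \<le> (\<integral>\<^sup>+s. \<integral>\<^sup>+s'. ?F s' \<partial>step (pr r i) (Suc t) s \<partial>game_dist n (pr r i) t)"
    unfolding Qv_def by (rule nn_integral_mono_AE, rule AE_pmfI, rule one_step[OF vp n4])
  also have "\<dots> = (\<integral>\<^sup>+s'. ?F s' \<partial>game_dist n (pr r i) (Suc t))" by simp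
  also have "\<dots> = (\<integral>\<^sup>+s'. ennreal (real (Suc t) * indicator {s'. lat s' i = Some (Suc t)} s') \<partial>game_dist n (pr r i) (Suc t))
       + (\<integral>\<^sup>+s'. ennreal (Hq i (Suc t) s') \<partial>game_dist n (pr r i) (Suc t))"
    by (subst nn_integral_add[symmetric]) (auto simp: Hq_nonneg ennreal_plus[symmetric] simp del: ennreal_plus)
  also have "\<dots> = ennreal (real (Suc t) * lat_prob n (pr r i) i (Suc t)) + Qv n r i (Suc t)"
    by (simp only: nn_cind[OF of_nat_0_le_iff] lat_prob_def Qv_def)
  finally show ?thesis .
qed

lemma Q0: "i < n \<Longrightarrow> Qv n r i 0 = ennreal (V (n - 1))"
  by (simp add: Qv_def Hq_def init_state_def V_nonneg)

lemma tele:
  assumes vp: "valid_protocol 2 r" and n4: "n \<le> 4" and i: "i < n"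
  shows "ennreal (V (n - 1)) \<le> ennreal (\<Sum>u<T. real (Suc u) * lat_prob n (pr r i) i (Suc u)) + Qv n r i T"
proof (induction T)
  case 0
  then show ?case using Q0[OF i] by simp
next
  case (Suc T)
  have nn: "\<And>u. 0 \<le> real (Suc u) * lat_prob n (pr r i) i (Suc u)" by (simp add: lat_prob_def)
  have "ennreal (V (n - 1)) \<le> ennreal (\<Sum>u<T. real (Suc u) * lat_prob n (pr r i) i (Suc u)) + Qv n r i T" by (rule Suc.IH)
  also have "\<dots> \<le> ennreal (\<Sum>u<T. real (Suc u) * lat_prob n (pr r i) i (Suc u)) + (ennreal (real (Suc T) * lat_prob n (pr r i) i (Suc T)) + Qv n r i (Suc T))"
    by (intro add_left_mono Q_step[OF vp n4])
  also have "\<dots> = ennreal (\<Sum>u<Suc T. real (Suc u) * lat_prob n (pr r i) i (Suc u)) + Qv n r i (Suc T)"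
    using nn by (simp add: ennreal_plus[symmetric] sum_nonneg add.assoc del: ennreal_plus)
  finally show ?case .
qed

definition pend :: "nat \<Rightarrow> protocol \<Rightarrow> nat \<Rightarrow> nat \<Rightarrow> real" where
  "pend n r i t = measure_pmf.prob (game_dist n (pr r i) t) {s. i \<in> pending s}"

lemma Q_bound:
  shows "Qv n r i T \<le> ennreal ((real T + 4) * pend n r i T)"
proof -
  have "Qv n r i T \<le> (\<integral>\<^sup>+s. ennreal ((real T + 4) * indicator {s. i \<in> pending s} s) \<partial>game_dist n (pr r i) T)"
    unfolding Qv_def by (intro nn_integral_mono ennreal_leI) (auto simp: Hq_def V_def)
  also have "\<dots> = ennreal ((real T + 4) * pend n r i T)"
    unfolding pend_def by (rule nn_cind) simp
  finally show ?thesis .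
qed

lemma pend_state:
  assumes s: "s \<in> set_pmf (game_dist n (pr r i) t)"
  shows "(\<integral>\<^sup>+s'. (indicator {s. i \<in> pending s} s' + indicator {s. lat s i = Some (Suc t)} s' :: ennreal) \<partial>step (pr r i) (Suc t) s)
     \<le> indicator {s. i \<in> pending s} s"
proof (cases "i \<in> pending s")
  case False
  have "lat s i \<noteq> Some (Suc t)" using invariant[OF s] Suc_n_not_le_n by blast
  then have "\<And>a. (indicator {s. i \<in> pending s} (update (Suc t) s a) + indicator {s. lat s i = Some (Suc t)} (update (Suc t) s a) :: ennreal) = 0"
    using False by (auto simp: update_pending update_lat indicator_def dest: subsetD[OF newpend_sub])
  then show ?thesis by (simp add: step_def)
next
  case True
  have "lat s i \<noteq> Some (Suc t)" using invariant[OF s] Suc_n_not_le_n by blast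
  then have le1: "\<And>a. (indicator {s. i \<in> pending s} (update (Suc t) s a) + indicator {s. lat s i = Some (Suc t)} (update (Suc t) s a) :: ennreal) \<le> 1"
    using True by (auto simp: update_pending update_lat indicator_def)
  have "(\<integral>\<^sup>+s'. (indicator {s. i \<in> pending s} s' + indicator {s. lat s i = Some (Suc t)} s' :: ennreal) \<partial>step (pr r i) (Suc t) s)
     \<le> (\<integral>\<^sup>+a. 1 \<partial>Pi_pmf (pending s) 0 (\<lambda>j. pr r i j (hist s j)))"
    unfolding step_def nn_integral_map_pmf by (rule nn_integral_mono, rule le1)
  also have "\<dots> = 1" by simp
  finally show ?thesis using True by simp
qed

lemma two_ind: "ennreal (measure_pmf.prob M A) + ennreal (measure_pmf.prob M B) = (\<integral>\<^sup>+x. (indicator A x + indicator B x :: ennreal) \<partial>measure_pmf M)"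
  by (simp add: nn_integral_add measure_pmf.emeasure_eq_measure[symmetric])

lemma pend_step: "pend n r i (Suc t) + lat_prob n (pr r i) i (Suc t) \<le> pend n r i t"
proof -
  let ?A = "{s. i \<in> pending s}" and ?L = "{s. lat s i = Some (Suc t)}"
  have "ennreal (pend n r i (Suc t) + lat_prob n (pr r i) i (Suc t)) =
      (\<integral>\<^sup>+s'. (indicator ?A s' + indicator ?L s' :: ennreal) \<partial>game_dist n (pr r i) (Suc t))"
    unfolding pend_def lat_prob_def by (simp only: two_ind ennreal_plus measure_nonneg)
  also have "\<dots> = (\<integral>\<^sup>+s. \<integral>\<^sup>+s'. (indicator ?A s' + indicator ?L s' :: ennreal) \<partial>step (pr r i) (Suc t) s \<partial>game_dist n (pr r i) t)"
    by simp
  also have "\<dots> \<le> (\<integral>\<^sup>+s. indicator ?A s \<partial>game_dist n (pr r i) t)"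
    by (rule nn_integral_mono_AE, rule AE_pmfI, rule pend_state)
  also have "\<dots> = ennreal (pend n r i t)"
    by (simp add: pend_def measure_pmf.emeasure_eq_measure)
  finally show ?thesis by (simp add: pend_def)
qed

lemma pend_sum:
  assumes i: "i < n"
  shows "pend n r i T + (\<Sum>u<T. lat_prob n (pr r i) i (Suc u)) \<le> 1"
proof (induction T)
  case 0
  then show ?case by (simp add: pend_def)
next
  case (Suc T)
  then show ?case using pend_step[of n r i T] by simp
qed

lemma real_bound:
  assumes vp: "valid_protocol 2 r" and n4: "n \<le> 4" and i: "i < n"
  shows "V (n - 1) \<le> (\<Sum>u<T. real (Suc u) * lat_prob n (pr r i) i (Suc u)) + (real T + 4) * pend n r i T"
proof -
  have nn1: "0 \<le> (\<Sum>u<T. real (Suc u) * lat_prob n (pr r i) i (Suc u))"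
    by (intro sum_nonneg) (simp add: lat_prob_def)
  have nn2: "0 \<le> (real T + 4) * pend n r i T" by (simp add: pend_def)
  have "ennreal (V (n - 1)) \<le> ennreal (\<Sum>u<T. real (Suc u) * lat_prob n (pr r i) i (Suc u)) + Qv n r i T"
    by (rule tele[OF vp n4 i])
  also have "\<dots> \<le> ennreal (\<Sum>u<T. real (Suc u) * lat_prob n (pr r i) i (Suc u)) + ennreal ((real T + 4) * pend n r i T)"
    by (intro add_left_mono Q_bound)
  also have "\<dots> = ennreal ((\<Sum>u<T. real (Suc u) * lat_prob n (pr r i) i (Suc u)) + (real T + 4) * pend n r i T)"
    using nn1 nn2 by (simp add: ennreal_plus)
  finally show ?thesis using nn1 nn2 by (subst (asm) ennreal_le_iff) auto
qed

theorem lemma5: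
  fixes n i :: nat and r :: protocol
  assumes "2 \<le> n" and "n \<le> 4" and "i < n"
    and "valid_protocol 2 r"
    and "r \<notin> G_f2 n i"
  shows "expected_latency n (\<lambda>j. if j = i then r else f2) i \<ge> ennreal (2 ^ n / real n)"
proof -
  note vp = assms(4) and n4 = assms(2) and i = assms(3)
  define p where "p = lat_prob n (pr r i) i"
  have pnn: "\<And>u. 0 \<le> p u" by (simp add: p_def lat_prob_def)
  have wnn: "\<And>u. 0 \<le> real u * p u" using pnn by simp
  have p0: "p 0 = 0" by (simp add: p_def lat_prob_def init_state_def)
  have c: "V (n - 1) = 2 ^ n / real n"
  proof -
    have "n = 2 \<or> n = 3 \<or> n = 4" using assms(1,2) by arith
    then show ?thesis by (auto simp: V_def)
  qed
  show ?thesis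
  proof (cases "(\<Sum>t. ennreal (p t)) = 1")
    case False
    then show ?thesis unfolding expected_latency_def p_def by simp
  next
    case True
    have sp: "summable p" using True by (intro summable_suminf_not_top[OF pnn]) simp
    have s1: "suminf p = 1" using True suminf_ennreal2[OF pnn sp] by simp
    show ?thesis
    proof (cases "(\<Sum>t. ennreal (real t * p t)) = top")
      case True2: True
      then show ?thesis using True unfolding expected_latency_def p_def by simp
    next
      case False
      have sw: "summable (\<lambda>t. real t * p t)" using False by (intro summable_suminf_not_top[OF wnn]) simp
      define S where "S = (\<Sum>t. real t * p t)"
      have eS: "expected_latency n (pr r i) i = ennreal S"
        using True suminf_ennreal2[OF wnn sw] unfolding expected_latency_def p_def S_def by simp
      have bound: "V (n - 1) \<le> S + 4 * (1 - (\<Sum>u<Suc T. p u))" for T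
      proof -
        let ?A = "\<Sum>u<Suc T. real u * p u" and ?B = "\<Sum>u<Suc T. p u"
        have A: "(\<Sum>u<T. real (Suc u) * p (Suc u)) = ?A" by (subst sum.lessThan_Suc_shift) simp
        have B: "(\<Sum>u<T. p (Suc u)) = ?B" using p0 by (subst sum.lessThan_Suc_shift) simp
        have pe: "pend n r i T \<le> 1 - ?B" using pend_sum[OF i, of r T] B unfolding p_def by simp
        define tp where "tp = (\<Sum>k. p (k + Suc T))"
        define tw where "tw = (\<Sum>k. real (k + Suc T) * p (k + Suc T))"
        have tp: "tp = 1 - ?B" unfolding tp_def using suminf_minus_initial_segment[OF sp, of "Suc T"] s1 by simp
        have tw: "tw = S - ?A" unfolding tw_def S_def using suminf_minus_initial_segment[OF sw, of "Suc T"] by simp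
        have sp': "summable (\<lambda>k. p (k + Suc T))" using sp by (rule summable_ignore_initial_segment)
        have sw': "summable (\<lambda>k. real (k + Suc T) * p (k + Suc T))"
          using summable_ignore_initial_segment[OF sw, of "Suc T"] by simp
        have "real T * tp = (\<Sum>k. real T * p (k + Suc T))" unfolding tp_def using suminf_mult[OF sp'] by simp
        also have "\<dots> \<le> tw" unfolding tw_def
          by (intro suminf_le summable_mult sp' sw') (simp add: mult_right_mono pnn)
        finally have Ttp: "real T * tp \<le> tw" .
        have "V (n - 1) \<le> ?A + (real T + 4) * pend n r i T"
          using real_bound[OF vp n4 i, of T] A unfolding p_def by simp
        also have "\<dots> \<le> ?A + (real T + 4) * tp" using pe tp by (intro add_left_mono mult_left_mono) auto
        also have "\<dots> = ?A + real T * tp + 4 * tp" by (simp add: algebra_simps)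
        also have "\<dots> \<le> ?A + tw + 4 * tp" using Ttp by simp
        also have "\<dots> = S + 4 * (1 - ?B)" using tw tp by simp
        finally show ?thesis .
      qed
      have h: "(\<lambda>T. (\<Sum>u<Suc T. p u)) \<longlonglongrightarrow> suminf p"
        by (rule LIMSEQ_Suc[OF summable_LIMSEQ[OF sp]])
      have lim: "(\<lambda>T. S + 4 * (1 - (\<Sum>u<Suc T. p u))) \<longlonglongrightarrow> S + 4 * (1 - suminf p)"
        by (intro tendsto_intros h)
      have "V (n - 1) \<le> S + 4 * (1 - suminf p)"
        by (rule LIMSEQ_le_const[OF lim]) (use bound in blast)
      then have "2 ^ n / real n \<le> S" using c s1 by simp
      then show ?thesis using eS by (simp add: ennreal_leI)
    qed
  qed
qed

end
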